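(* Let $f:\mathbb R^n\to\mathbb R$ be convex and differentiable with $f(x)\le f(y)+\langle\nabla f(y),x-y\rangle+\frac L2\|x-y\|_2^2$ for all $x,y\in\mathbb R^n$, attaining its minimum $f_*$ at $x_*$. Apply RSTM (see context) on $Q=\mathbb R^n$ with $\rho=n$, $V[z](x)=\frac L2\|x-z\|_2^2$ and oracle $G(x)=n(\langle\nabla f(x),e\rangle+\xi(x))e$, where $e$ is uniformly distributed on the Euclidean unit sphere $\{s\in\mathbb R^n:\|s\|_2=1\}$ and the directional-derivative error satisfies $|\xi(x)|\le\Delta$ for all $x$. Let $P_0^2=(1-\frac1n)(f(x_0)-f_* )+\frac L2\|u_0-x_*\|_2^2$. (1) Fix $k\ge1$. If at all iterations up to $k$ the error level satisfies $\Delta\le\frac{P_0\sqrt L}{4nA_k}$, then $\mathbb Ef(x_k)-f_*\le\frac{6n^2P_0^2}{(k-1+2n)^2}$. (2) In general, for all $k\ge1$, $\mathbb Ef(x_k)-f_*\le\frac{8n^2P_0^2}{(k-1+2n)^2}+\frac4L(k-1+2n)^2\Delta^2$.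
   Context: RSTM with parameter $\rho\ge1$, feasible set $Q$, Bregman divergence $V[\cdot](\cdot)$ and random oracle $G$ (a random vector in $E^*$ for each query point, sampled afresh and independently of the past at each call): choose $u_0\in Q$, set $A_0=\alpha_0=1-\frac1\rho$, $x_0=y_0=u_0$; for $k\ge0$, $\alpha_{k+1}$ is the largest root of $A_k+\alpha_{k+1}=\rho^2\alpha_{k+1}^2$, $A_{k+1}=A_k+\alpha_{k+1}$, $y_{k+1}=\frac{\alpha_{k+1}u_k+A_kx_k}{A_{k+1}}$, $u_{k+1}=\arg\min_{x\in Q}\{V[u_k](x)+\alpha_{k+1}\langle G(y_{k+1}),x\rangle\}$, $x_{k+1}=y_{k+1}+\rho\frac{\alpha_{k+1}}{A_{k+1}}(u_{k+1}-u_k)$. $\mathbb E$ is the expectation over all randomness up to iteration $k$. *)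

theory Defs
  imports "HOL-Analysis.Analysis" "HOL-Probability.Probability"
begin

text \<open>RSTM step sizes: alpha_{k+1} is the largest root of A_k + a = rho^2 a^2.\<close>

definition rstm_alpha_next :: "real \<Rightarrow> real \<Rightarrow> real" where
  "rstm_alpha_next \<rho> Ak = (1 + sqrt (1 + 4 * \<rho>\<^sup>2 * Ak)) / (2 * \<rho>\<^sup>2)"

fun rstm_A :: "real \<Rightarrow> nat \<Rightarrow> real" where
  "rstm_A \<rho> 0 = 1 - 1 / \<rho>"
| "rstm_A \<rho> (Suc k) = rstm_A \<rho> k + rstm_alpha_next \<rho> (rstm_A \<rho> k)"

text \<open>State (x_k, u_k) of RSTM.  The oracle G takes the query point and the fresh
  random sample of the current iteration; omega k is the sample used at step k -> k+1.\<close>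

fun rstm_state :: "real \<Rightarrow> 'a::real_inner set \<Rightarrow> ('a \<Rightarrow> 'a \<Rightarrow> real) \<Rightarrow>
    ('a \<Rightarrow> 'b \<Rightarrow> 'a) \<Rightarrow> 'a \<Rightarrow> (nat \<Rightarrow> 'b) \<Rightarrow> nat \<Rightarrow> 'a \<times> 'a" where
  "rstm_state \<rho> Q V G u0 \<omega> 0 = (u0, u0)"
| "rstm_state \<rho> Q V G u0 \<omega> (Suc k) =
     (let (x, u) = rstm_state \<rho> Q V G u0 \<omega> k;
          Ak = rstm_A \<rho> k;
          a = rstm_alpha_next \<rho> Ak;
          Ak1 = Ak + a;
          y = (1 / Ak1) *\<^sub>R (a *\<^sub>R u + Ak *\<^sub>R x);
          u' = arg_min (\<lambda>z. V u z + a * inner (G y (\<omega> k)) z) (\<lambda>z. z \<in> Q);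
          x' = y + (\<rho> * a / Ak1) *\<^sub>R (u' - u)
      in (x', u'))"

definition rstm_x where
  "rstm_x \<rho> Q V G u0 \<omega> k = fst (rstm_state \<rho> Q V G u0 \<omega> k)"

definition unif_sphere :: "'a::euclidean_space measure" where
  "unif_sphere = distr (uniform_measure lborel (ball 0 1)) borel (\<lambda>x. x /\<^sub>R norm x)"

definition sphere_seq_space :: "(nat \<Rightarrow> 'a::euclidean_space) measure" where
  "sphere_seq_space = PiM UNIV (\<lambda>_. unif_sphere)"

end

theory Submission
  imports Defs
begin


lemma prod_Basis_cart: "(\<Prod>b\<in>Basis. (v::real^'n) \<bullet> b) = (\<Prod>i\<in>UNIV. v$i)"
  by (simp add: Basis_vec_def cart_eq_inner_axis axis_eq_axis prod.UNION_disjoint)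

lemma lborel_signed_perm:
  fixes p :: "'n::finite \<Rightarrow> 'n" and \<sigma> :: "'n \<Rightarrow> real"
  assumes p: "bij p" and \<sigma>: "\<And>k. \<sigma> k = 1 \<or> \<sigma> k = -1"
  shows "distr lborel borel (\<lambda>x::real^'n. \<chi> k. \<sigma> k * x $ p k) = lborel"
proof (rule lborel_eqI[symmetric])
  let ?T = "(\<lambda>x::real^'n. \<chi> k. \<sigma> k * x $ p k)"
  have [measurable]: "?T \<in> borel \<rightarrow>\<^sub>M borel"
    by (intro borel_measurable_continuous_onI continuous_intros)
  fix l u :: "real^'n" assume le: "\<And>b. b \<in> Basis \<Longrightarrow> l \<bullet> b \<le> u \<bullet> b"
  then have le': "l $ i \<le> u $ i" for i
    using le[of "axis i 1"] by (simp add: cart_eq_inner_axis axis_in_Basis_iff)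
  define q where "q = inv p"
  have pq: "p (q j) = j" "q (p j) = j" for j using p unfolding q_def
    by (auto simp: bij_def surj_f_inv_f inv_f_f)
  define l' :: "real^'n" where "l' = (\<chi> j. if \<sigma> (q j) = 1 then l $ q j else - u $ q j)"
  define u' :: "real^'n" where "u' = (\<chi> j. if \<sigma> (q j) = 1 then u $ q j else - l $ q j)"
  have eq: "?T -` box l u = box l' u'"
  proof -
    have "x \<in> ?T -` box l u \<longleftrightarrow> x \<in> box l' u'" for x
    proof -
      have "x \<in> ?T -` box l u \<longleftrightarrow> (\<forall>k. l$k < \<sigma> k * x $ p k \<and> \<sigma> k * x $ p k < u $ k)"
        by (simp add: mem_box_cart)
      also have "\<dots> \<longleftrightarrow> (\<forall>j. l$(q j) < \<sigma> (q j) * x $ j \<and> \<sigma> (q j) * x $ j < u $ (q j))"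
        by (metis pq)
      also have "\<dots> \<longleftrightarrow> x \<in> box l' u'"
        unfolding mem_box_cart l'_def u'_def
        using \<sigma> by (auto simp: vec_lambda_beta) (metis mult_minus_left mult_1 minus_less_iff less_minus_iff)+
      finally show ?thesis .
    qed
    then show ?thesis by blast
  qed
  have "(\<Prod>j\<in>UNIV. u' $ j - l' $ j) = (\<Prod>j\<in>UNIV. u $ q j - l $ q j)"
    by (intro prod.cong) (auto simp: u'_def l'_def)
  also have "\<dots> = (\<Prod>k\<in>UNIV. u $ k - l $ k)"
    using prod.reindex[of q UNIV "\<lambda>k. u $ k - l $ k"] p
    by (metis (mono_tags, lifting) bij_betw_def bij_imp_bij_inv comp_apply prod.cong q_def)
  finally have pr: "(\<Prod>j\<in>UNIV. u' $ j - l' $ j) = (\<Prod>k\<in>UNIV. u $ k - l $ k)" .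
  have le2: "\<forall>b\<in>Basis. l' \<bullet> b \<le> u' \<bullet> b"
    using le' \<sigma> by (fastforce simp: Basis_vec_def inner_axis l'_def u'_def)
  show "emeasure (distr lborel borel ?T) (box l u) = (\<Prod>b\<in>Basis. (u - l) \<bullet> b)"
    apply (subst emeasure_distr, simp, simp)
    apply (simp add: eq emeasure_lborel_box_eq le2)
    apply (simp only: prod_Basis_cart vector_minus_component pr)
    done
qed simp


lemma meas_normalize[measurable]: "(\<lambda>x::'a::euclidean_space. x /\<^sub>R norm x) \<in> borel_measurable borel"
  by measurable

lemma ub_prob: "prob_space (uniform_measure lborel (ball (0::'a::euclidean_space) 1))"
  apply (rule prob_space_uniform_measure)
  using emeasure_lborel_ball_finite[of "0::'a" 1]
  using unit_ball_vol_pos[of "real DIM('a)"] by (auto simp: emeasure_ball simp del: unit_ball_vol_pos)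

lemma sphere_prob: "prob_space (unif_sphere :: 'a::euclidean_space measure)"
  unfolding unif_sphere_def
  by (rule prob_space.prob_space_distr[OF ub_prob]) simp

lemma sphere_sets[simp, measurable_cong]: "sets unif_sphere = sets borel"
  and sphere_space[simp]: "space unif_sphere = UNIV"
  by (simp_all add: unif_sphere_def)

lemma sphere_norm: "AE e in (unif_sphere :: 'a::euclidean_space measure). norm e = 1"
proof -
  have "AE x in uniform_measure lborel (ball (0::'a) 1). x \<noteq> 0"
    by (rule AE_uniform_measureI) (use AE_lborel_singleton[of "0::'a"] in auto)
  then have "AE x in uniform_measure lborel (ball (0::'a) 1). norm (x /\<^sub>R norm x) = 1"
    by eventually_elim simp
  then show ?thesis
    unfolding unif_sphere_def by (subst AE_distr_iff) auto
qed

lemma sphere_invariant: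
  fixes T :: "'a::euclidean_space \<Rightarrow> 'a"
  assumes lb: "distr lborel borel T = lborel" and nT: "\<And>x. norm (T x) = norm x"
    and sT: "\<And>x c. T (c *\<^sub>R x) = c *\<^sub>R T x" and mT[measurable]: "T \<in> borel_measurable borel"
  shows "distr unif_sphere borel T = unif_sphere"
proof -
  let ?U = "uniform_measure lborel (ball (0::'a) 1)"
  have U: "distr ?U borel T = ?U"
  proof (rule measure_eqI)
    fix B assume B: "B \<in> sets (distr ?U borel T)"
    then have B': "B \<in> sets borel" by simp
    have TB: "T -` B \<in> sets borel" using measurable_sets[OF mT B'] by simp
    have pre: "T -` (ball 0 1 \<inter> B) = ball 0 1 \<inter> T -` B"
      using nT by auto
    have pre2: "T -` ball 0 1 \<inter> T -` B = ball 0 1 \<inter> T -` B"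
      using nT by auto
    have "emeasure (distr ?U borel T) B = emeasure ?U (T -` B)"
      using B' by (simp add: emeasure_distr)
    also have "\<dots> = emeasure lborel (ball 0 1 \<inter> T -` B) / emeasure lborel (ball (0::'a) 1)"
      using B' TB by (subst emeasure_uniform_measure) auto
    also have "emeasure lborel (ball 0 1 \<inter> T -` B) = emeasure (distr lborel borel T) (ball 0 1 \<inter> B)"
      using B' by (subst emeasure_distr) (auto simp: pre pre2)
    also have "\<dots> = emeasure lborel (ball 0 1 \<inter> B)" by (simp add: lb)
    also have "emeasure lborel (ball 0 1 \<inter> B) / emeasure lborel (ball (0::'a) 1) = emeasure ?U B"
      using B' by (subst emeasure_uniform_measure) auto
    finally show "emeasure (distr ?U borel T) B = emeasure ?U B" .
  qed simp
  have "distr unif_sphere borel T = distr ?U borel (T \<circ> (\<lambda>x. x /\<^sub>R norm x))"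
    unfolding unif_sphere_def by (subst distr_distr) auto
  also have "T \<circ> (\<lambda>x. x /\<^sub>R norm x) = (\<lambda>x. x /\<^sub>R norm x) \<circ> T"
    by (auto simp: sT nT)
  also have "distr ?U borel \<dots> = distr (distr ?U borel T) borel (\<lambda>x. x /\<^sub>R norm x)"
    by (subst distr_distr) auto
  also have "\<dots> = unif_sphere" by (simp add: U unif_sphere_def)
  finally show ?thesis .
qed

lemma sphere_integral_invariant:
  fixes T :: "'a::euclidean_space \<Rightarrow> 'a" and h :: "'a \<Rightarrow> real"
  assumes "distr lborel borel T = lborel" "\<And>x. norm (T x) = norm x"
    "\<And>x c. T (c *\<^sub>R x) = c *\<^sub>R T x" "T \<in> borel_measurable borel"
    and h: "h \<in> borel_measurable borel"
  shows "(\<integral>e. h (T e) \<partial>unif_sphere) = (\<integral>e. h e \<partial>unif_sphere)"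
proof -
  have "(\<integral>e. h e \<partial>unif_sphere) = (\<integral>e. h e \<partial>distr unif_sphere borel T)"
    by (simp add: sphere_invariant[OF assms(1-4)])
  also have "\<dots> = (\<integral>e. h (T e) \<partial>unif_sphere)"
    by (rule integral_distr) (use assms in auto)
  finally show ?thesis by simp
qed


lemma signed_perm_props:
  fixes p :: "'n::finite \<Rightarrow> 'n" and \<sigma> :: "'n \<Rightarrow> real"
  assumes p: "bij p" and \<sigma>: "\<And>k. \<sigma> k = 1 \<or> \<sigma> k = -1"
  defines "T \<equiv> (\<lambda>x::real^'n. \<chi> k. \<sigma> k * x $ p k)"
  shows "norm (T x) = norm x" "T (c *\<^sub>R x) = c *\<^sub>R T x" "T \<in> borel_measurable borel"
proof -
  have sq: "(\<sigma> k)\<^sup>2 = 1" for k using \<sigma>[of k] by auto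
  have "inner (T x) (T x) = (\<Sum>k\<in>UNIV. (\<sigma> k)\<^sup>2 * (x $ p k * x $ p k))"
    by (simp add: T_def inner_vec_def power2_eq_square algebra_simps)
  also have "\<dots> = (\<Sum>k\<in>UNIV. x $ p k * x $ p k)" by (simp add: sq)
  also have "\<dots> = (\<Sum>k\<in>UNIV. x $ k * x $ k)"
    using sum.reindex[of p UNIV "\<lambda>k. x $ k * x $ k"] p
    by (simp add: bij_def)
  also have "\<dots> = inner x x" by (simp add: inner_vec_def)
  finally show "norm (T x) = norm x" by (simp add: norm_eq_sqrt_inner)
  show "T (c *\<^sub>R x) = c *\<^sub>R T x" by (simp add: T_def vec_eq_iff)
  show "T \<in> borel_measurable borel" unfolding T_def
    by (intro borel_measurable_continuous_onI continuous_intros)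
qed

lemma sphere_integral_signed_perm:
  fixes p :: "'n::finite \<Rightarrow> 'n" and \<sigma> :: "'n \<Rightarrow> real" and h :: "real^'n \<Rightarrow> real"
  assumes p: "bij p" and \<sigma>: "\<And>k. \<sigma> k = 1 \<or> \<sigma> k = -1" and h: "h \<in> borel_measurable borel"
  shows "(\<integral>e. h (\<chi> k. \<sigma> k * e $ p k) \<partial>unif_sphere) = (\<integral>e. h e \<partial>unif_sphere)"
  by (rule sphere_integral_invariant[OF lborel_signed_perm[OF p \<sigma>] signed_perm_props[OF p \<sigma>] h])

lemma sphere_comp_bound: "AE e in (unif_sphere::(real^'n) measure). \<bar>e $ i\<bar> \<le> 1"
  using sphere_norm by eventually_elim (metis component_le_norm_cart)

lemma integrable_comp1: "integrable (unif_sphere::(real^'n) measure) (\<lambda>e. e $ i)"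
proof -
  interpret prob_space "unif_sphere::(real^'n) measure" by (rule sphere_prob)
  show ?thesis
    by (rule integrable_const_bound[where B=1]) (use sphere_comp_bound in auto)
qed

lemma integrable_comp2: "integrable (unif_sphere::(real^'n) measure) (\<lambda>e. e $ i * e $ j)"
proof -
  interpret prob_space "unif_sphere::(real^'n) measure" by (rule sphere_prob)
  show ?thesis
  proof (rule integrable_const_bound[where B=1])
  show "AE e in (unif_sphere::(real^'n) measure). norm (e $ i * e $ j) \<le> 1"
    using sphere_comp_bound[of i] sphere_comp_bound[of j]
    by eventually_elim (simp add: abs_mult mult_le_one)
qed simp
qed

lemma refl_bij: "bij (\<lambda>a::'n. a)" unfolding bij_def by (auto simp: inj_on_def)

lemma moment1: "(\<integral>e. e $ i \<partial>(unif_sphere::(real^'n::finite) measure)) = 0"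
proof -
  have "(\<integral>e. (\<lambda>x::real^'n. x $ i) (\<chi> k. (if k = i then -1 else 1) * e $ id k) \<partial>unif_sphere)
      = (\<integral>e. (\<lambda>x::real^'n. x $ i) e \<partial>unif_sphere)"
    by (rule sphere_integral_signed_perm) (auto simp: refl_bij)
  then have "(\<integral>e. - (e $ i) \<partial>(unif_sphere::(real^'n) measure)) = (\<integral>e. e $ i \<partial>unif_sphere)" by simp
  then show ?thesis by simp
qed

lemma moment2_off: "i \<noteq> j \<Longrightarrow> (\<integral>e. e $ i * e $ j \<partial>(unif_sphere::(real^'n::finite) measure)) = 0"
proof -
  assume ij: "i \<noteq> j"
  have "(\<integral>e. (\<lambda>x::real^'n. x $ i * x $ j) (\<chi> k. (if k = i then -1 else 1) * e $ id k) \<partial>unif_sphere)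
      = (\<integral>e. (\<lambda>x::real^'n. x $ i * x $ j) e \<partial>unif_sphere)"
    by (rule sphere_integral_signed_perm) (auto simp: refl_bij)
  then have "(\<integral>e. - (e $ i * e $ j) \<partial>(unif_sphere::(real^'n) measure)) = (\<integral>e. e $ i * e $ j \<partial>unif_sphere)"
    using ij by simp
  then show ?thesis by simp
qed

lemma moment2_eq:
  fixes i j :: "'n::finite"
  shows "(\<integral>e. e $ i * e $ i \<partial>(unif_sphere::(real^'n::finite) measure)) = (\<integral>e. e $ j * e $ j \<partial>unif_sphere)"
proof -
  let ?p = "\<lambda>k::'n. if k = i then j else if k = j then i else k"
  have b: "bij ?p" unfolding bij_def inj_def surj_def by (auto) metis+
  have "(\<integral>e. (\<lambda>x::real^'n. x $ i * x $ i) (\<chi> k. 1 * e $ ?p k) \<partial>unif_sphere)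
      = (\<integral>e. (\<lambda>x::real^'n. x $ i * x $ i) e \<partial>unif_sphere)"
    by (rule sphere_integral_signed_perm[OF b]) auto
  then show ?thesis by simp
qed

lemma moment2_diag: "(\<integral>e. e $ i * e $ i \<partial>(unif_sphere::(real^'n::finite) measure)) = 1 / real CARD('n)"
proof -
  interpret prob_space "unif_sphere::(real^'n) measure" by (rule sphere_prob)
  have "(\<Sum>j\<in>UNIV. (\<integral>e. e $ j * e $ j \<partial>(unif_sphere::(real^'n) measure))) = (\<integral>e. (\<Sum>j\<in>UNIV. e $ j * e $ j) \<partial>(unif_sphere::(real^'n) measure))"
    by (rule Bochner_Integration.integral_sum[symmetric]) (rule integrable_comp2)
  also have "\<dots> = (\<integral>e. 1 \<partial>(unif_sphere::(real^'n) measure))"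
  proof (rule integral_cong_AE)
    show "AE e in unif_sphere. (\<Sum>j\<in>UNIV. e $ j * e $ j) = (1::real)"
      using sphere_norm by eventually_elim (simp add: norm_eq_1 inner_vec_def)
  qed auto
  also have "\<dots> = 1" using prob_space by simp
  finally have "(\<Sum>j\<in>UNIV. (\<integral>e. e $ j * e $ j \<partial>(unif_sphere::(real^'n) measure))) = 1" .
  moreover have "(\<Sum>j\<in>UNIV. (\<integral>e. e $ j * e $ j \<partial>(unif_sphere::(real^'n) measure)))
     = (\<Sum>j\<in>(UNIV::'n set). (\<integral>e. e $ i * e $ i \<partial>(unif_sphere::(real^'n) measure)))"
    by (rule sum.cong) (auto intro: moment2_eq)
  ultimately have "real CARD('n) * (\<integral>e. e $ i * e $ i \<partial>(unif_sphere::(real^'n) measure)) = 1"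
    by simp
  then show ?thesis by (simp add: field_simps)
qed


lemma inner_cart_sum: "inner (v::real^'n) e = (\<Sum>i\<in>UNIV. v$i * e$i)"
  by (simp add: inner_vec_def)

lemma inner_prod_sum: "inner (v::real^'n) e * inner w e = (\<Sum>i\<in>UNIV. \<Sum>j\<in>UNIV. (v$i * w$j) * (e$i * e$j))"
  by (simp add: inner_cart_sum sum_product algebra_simps)

lemma integrable_inner1: "integrable (unif_sphere::(real^'n::finite) measure) (\<lambda>e. inner v e)"
  unfolding inner_cart_sum by (intro Bochner_Integration.integrable_sum integrable_mult_right integrable_comp1)

lemma integrable_inner2: "integrable (unif_sphere::(real^'n::finite) measure) (\<lambda>e. inner v e * inner w e)"
  unfolding inner_prod_sum by (intro Bochner_Integration.integrable_sum integrable_mult_right integrable_comp2)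

lemma mom_inner1: "(\<integral>e. inner v e \<partial>(unif_sphere::(real^'n::finite) measure)) = 0"
  unfolding inner_cart_sum
  by (subst Bochner_Integration.integral_sum) (auto intro: integrable_mult_right integrable_comp1 simp: moment1)

lemma moment2: "(\<integral>e. e$i * e$j \<partial>(unif_sphere::(real^'n::finite) measure)) = (if i = j then 1 / real CARD('n) else 0)"
  by (cases "i = j") (simp_all add: moment2_off moment2_diag)

lemma mom_inner2: "(\<integral>e. inner v e * inner w e \<partial>(unif_sphere::(real^'n::finite) measure)) = inner v w / real CARD('n)"
proof -
  have "(\<integral>e. inner v e * inner w e \<partial>(unif_sphere::(real^'n::finite) measure))
     = (\<Sum>i\<in>UNIV. \<Sum>j\<in>UNIV. (v$i * w$j) * (\<integral>e. e$i * e$j \<partial>(unif_sphere::(real^'n::finite) measure)))"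
    unfolding inner_prod_sum
    by (subst Bochner_Integration.integral_sum, intro Bochner_Integration.integrable_sum integrable_mult_right integrable_comp2,
        rule sum.cong, simp, subst Bochner_Integration.integral_sum, intro Bochner_Integration.integrable_sum integrable_mult_right integrable_comp2,
        simp)
  also have "\<dots> = (\<Sum>i\<in>UNIV. (v$i * w$i) / real CARD('n))"
    by (rule sum.cong) (simp_all add: moment2 if_distrib sum.delta sum.delta' cong: if_cong)
  also have "\<dots> = inner v w / real CARD('n)"
    by (simp add: inner_cart_sum sum_divide_distrib)
  finally show ?thesis .
qed


lemma alpha_pos: "\<rho> \<ge> 1 \<Longrightarrow> Ak \<ge> 0 \<Longrightarrow> rstm_alpha_next \<rho> Ak > 0"
  unfolding rstm_alpha_next_def by (intro divide_pos_pos add_pos_nonneg) auto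

lemma alpha_eq: assumes "\<rho> \<ge> 1" "Ak \<ge> 0"
  shows "\<rho>\<^sup>2 * (rstm_alpha_next \<rho> Ak)\<^sup>2 = Ak + rstm_alpha_next \<rho> Ak"
proof -
  define s where "s = sqrt (1 + 4 * \<rho>\<^sup>2 * Ak)"
  have s2: "s\<^sup>2 = 1 + 4 * \<rho>\<^sup>2 * Ak" unfolding s_def using assms by simp
  have r: "\<rho>\<^sup>2 > 0" using assms by simp
  have "\<rho>\<^sup>2 * ((1 + s) / (2 * \<rho>\<^sup>2))\<^sup>2 = (1 + 2 * s + s\<^sup>2) / (4 * \<rho>\<^sup>2)"
    using assms by (simp add: field_simps power2_eq_square)
  also have "\<dots> = Ak + (1 + s) / (2 * \<rho>\<^sup>2)"
    unfolding s2 using assms by (simp add: field_simps)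
  finally show ?thesis unfolding rstm_alpha_next_def s_def[symmetric] .
qed

lemma A_nonneg: "\<rho> \<ge> 1 \<Longrightarrow> rstm_A \<rho> k \<ge> 0"
proof (induction k)
  case 0 then show ?case by (simp add: field_simps)
next
  case (Suc k) then show ?case using alpha_pos[of \<rho> "rstm_A \<rho> k"] by simp
qed

lemma A_Suc_ge: "\<rho> \<ge> 1 \<Longrightarrow> rstm_A \<rho> k \<le> rstm_A \<rho> (Suc k)"
  using alpha_pos[of \<rho> "rstm_A \<rho> k"] A_nonneg[of \<rho> k] by simp

lemma A_mono: "\<rho> \<ge> 1 \<Longrightarrow> j \<le> k \<Longrightarrow> rstm_A \<rho> j \<le> rstm_A \<rho> k"
  using lift_Suc_mono_le[of "rstm_A \<rho>" j k] A_Suc_ge[of \<rho>] by blast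

lemma A_one: "\<rho> \<ge> 1 \<Longrightarrow> rstm_A \<rho> 1 = 1"
proof -
  assume r: "\<rho> \<ge> 1"
  have "1 + 4 * \<rho>\<^sup>2 * (1 - 1 / \<rho>) = (2 * \<rho> - 1)\<^sup>2"
    using r by (simp add: field_simps power2_eq_square)
  then have "sqrt (1 + 4 * \<rho>\<^sup>2 * (1 - 1 / \<rho>)) = 2 * \<rho> - 1" using r by simp
  then show ?thesis using r
    by (simp add: rstm_alpha_next_def field_simps power2_eq_square)
qed

lemma sqrtA_step: assumes r: "\<rho> \<ge> 1"
  shows "sqrt (rstm_A \<rho> (Suc k)) \<ge> sqrt (rstm_A \<rho> k) + 1 / (2 * \<rho>)"
proof -
  let ?Ak = "rstm_A \<rho> k" and ?a = "rstm_alpha_next \<rho> (rstm_A \<rho> k)"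
  have Ak: "?Ak \<ge> 0" using A_nonneg r .
  have "rstm_A \<rho> (Suc k) = (\<rho> * ?a)\<^sup>2"
    using alpha_eq[OF r Ak] by (simp add: power_mult_distrib)
  then have e: "sqrt (rstm_A \<rho> (Suc k)) = \<rho> * ?a"
    using alpha_pos[OF r Ak] r by simp
  have "sqrt (1 + 4 * \<rho>\<^sup>2 * ?Ak) \<ge> sqrt ((2 * \<rho> * sqrt ?Ak)\<^sup>2)"
    using Ak by (intro real_sqrt_le_mono) (simp add: power_mult_distrib)
  then have "sqrt (1 + 4 * \<rho>\<^sup>2 * ?Ak) \<ge> 2 * \<rho> * sqrt ?Ak"
    using r Ak by simp
  then have "\<rho> * ?a \<ge> (1 + 2 * \<rho> * sqrt ?Ak) / (2 * \<rho>)"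
    using r unfolding rstm_alpha_next_def by (simp add: field_simps power2_eq_square)
  also have "(1 + 2 * \<rho> * sqrt ?Ak) / (2 * \<rho>) = sqrt ?Ak + 1 / (2 * \<rho>)"
    using r by (simp add: field_simps)
  finally show ?thesis using e by simp
qed

lemma A_lower: assumes r: "\<rho> \<ge> 1" and k: "k \<ge> 1"
  shows "rstm_A \<rho> k \<ge> ((real k - 1 + 2 * \<rho>) / (2 * \<rho>))\<^sup>2"
proof -
  have "sqrt (rstm_A \<rho> (Suc m)) \<ge> 1 + real m / (2 * \<rho>)" for m
  proof (induction m)
    case 0 then show ?case using A_one[OF r] by simp
  next
    case (Suc m)
    have "1 + real (Suc m) / (2 * \<rho>) = (1 + real m / (2 * \<rho>)) + 1 / (2 * \<rho>)"
      using r by (simp add: field_simps)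
    then show ?case using sqrtA_step[OF r, of "Suc m"] Suc.IH by linarith
  qed
  from this[of "k - 1"] k have "sqrt (rstm_A \<rho> k) \<ge> 1 + real (k - 1) / (2 * \<rho>)" by simp
  also have "1 + real (k - 1) / (2 * \<rho>) = (real k - 1 + 2 * \<rho>) / (2 * \<rho>)"
    using r k by (simp add: field_simps of_nat_diff)
  finally have "sqrt (rstm_A \<rho> k) \<ge> (real k - 1 + 2 * \<rho>) / (2 * \<rho>)" .
  moreover have "(real k - 1 + 2 * \<rho>) / (2 * \<rho>) \<ge> 0" using r k by simp
  ultimately show ?thesis
    using A_nonneg[OF r, of k] by (metis power_mono real_sqrt_pow2)
qed


lemma argmin_quad:
  fixes u G :: "'a::real_inner"
  assumes L: "L > 0"
  shows "arg_min (\<lambda>z. L / 2 * (norm (z - u))\<^sup>2 + a * inner G z) (\<lambda>z. z \<in> UNIV) = u - (a / L) *\<^sub>R G"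
proof -
  let ?F = "\<lambda>z. L / 2 * (norm (z - u))\<^sup>2 + a * inner G z"
  let ?z = "u - (a / L) *\<^sub>R G"
  have F: "?F z = ?F ?z + L / 2 * (norm (z - ?z))\<^sup>2" for z
    using L by (simp add: power2_norm_eq_inner inner_simps field_simps) (simp add: algebra_simps inner_commute power2_eq_square)
  have uniq: "m = ?z" if "is_arg_min ?F (\<lambda>z. z \<in> UNIV) m" for m
  proof (rule ccontr)
    assume "m \<noteq> ?z"
    then have "norm (m - ?z) > 0" by simp
    then have "?F ?z < ?F m" using F[of m] L by (simp add: power2_eq_square)
    moreover have "\<not> ?F ?z < ?F m" using that unfolding is_arg_min_def by blast
    ultimately show False by blast
  qed
  have "is_arg_min ?F (\<lambda>z. z \<in> UNIV) ?z"
    unfolding is_arg_min_def using F L by (auto simp: not_less)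
  then show ?thesis unfolding arg_min_def using uniq by (rule some_equality)
qed


lemma norm_sub_sq: "(norm (v - c *\<^sub>R e))\<^sup>2 = (norm v)\<^sup>2 - 2 * c * inner v (e::'a::real_inner) + c\<^sup>2 * (norm e)\<^sup>2"
  unfolding power2_norm_eq_inner by (simp add: inner_simps inner_commute algebra_simps power2_eq_square)

locale rstm_setting =
  fixes f :: "real^'n::finite \<Rightarrow> real" and df :: "real^'n \<Rightarrow> real^'n"
    and L \<Delta> :: real and xs :: "real^'n" and \<xi> :: "real^'n \<Rightarrow> real"
  assumes L_pos: "L > 0"
    and convex: "convex_on UNIV f"
    and grad: "\<And>x. GDERIV f x :> df x"
    and smooth: "\<And>x y. f x \<le> f y + inner (df y) (x - y) + L / 2 * (norm (x - y))\<^sup>2"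
    and min: "\<And>x. f xs \<le> f x"
    and xi_meas: "\<xi> \<in> borel_measurable borel"
    and xi_bound: "\<And>x. \<bar>\<xi> x\<bar> \<le> \<Delta>"
begin


lemma nn_ge1: "(real CARD('n)) \<ge> 1"
  using finite_UNIV_card_ge_0[where 'a='n] by simp

definition "aa k = rstm_alpha_next (real CARD('n)) (rstm_A (real CARD('n)) k)"

definition "yy k s = (1 / rstm_A (real CARD('n)) (Suc k)) *\<^sub>R (aa k *\<^sub>R snd s + rstm_A (real CARD('n)) k *\<^sub>R fst s)"

definition "step k s e = (let y = yy k s; G = ((real CARD('n)) * (inner (df y) e + \<xi> y)) *\<^sub>R e;
    u' = snd s - (aa k / L) *\<^sub>R G in (y + ((real CARD('n)) * aa k / rstm_A (real CARD('n)) (Suc k)) *\<^sub>R (u' - snd s), u'))"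

primrec st :: "real^'n \<Rightarrow> nat \<Rightarrow> (nat \<Rightarrow> real^'n) \<Rightarrow> (real^'n) \<times> (real^'n)" where
  "st u0 0 \<omega> = (u0, u0)"
| "st u0 (Suc k) \<omega> = step k (st u0 k \<omega>) (\<omega> k)"

definition "\<Phi> k s = rstm_A (real CARD('n)) k * (f (fst s) - f xs) + L / 2 * (norm (snd s - xs))\<^sup>2"

lemma A_Suc: "rstm_A (real CARD('n)) (Suc k) = rstm_A (real CARD('n)) k + aa k"
  by (simp add: aa_def)

lemma aa_pos: "aa k > 0"
  unfolding aa_def using alpha_pos[OF nn_ge1 A_nonneg[OF nn_ge1]] .

lemma aa_eq: "(real CARD('n))\<^sup>2 * (aa k)\<^sup>2 = rstm_A (real CARD('n)) (Suc k)"
  unfolding aa_def using alpha_eq[OF nn_ge1 A_nonneg[OF nn_ge1]] by simp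

lemma state_eq:
  "rstm_state (real CARD('n)) UNIV (\<lambda>z x. L / 2 * (norm (x - z))\<^sup>2) (\<lambda>x e. ((real CARD('n)) * (inner (df x) e + \<xi> x)) *\<^sub>R e) u0 \<omega> k
    = st u0 k \<omega>"
proof (induction k)
  case 0 then show ?case by simp
next
  case (Suc k)
  show ?case
    apply (simp only: rstm_state.simps Suc.IH Let_def prod.case_eq_if argmin_quad[OF L_pos])
    apply (simp add: step_def yy_def aa_def Let_def)
    done
qed

lemma grad_ineq: "f z \<ge> f y + inner (df y) (z - y)"
proof -
  define d where "d = z - y"
  define g where "g = (\<lambda>t::real. f (y + t *\<^sub>R d))"
  have cg: "convex_on UNIV g"
  proof (rule convex_onI)
    fix t :: real and a b :: real assume t: "0 < t" "t < 1" "a \<in> UNIV" "b \<in> UNIV"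
    have "g ((1 - t) *\<^sub>R a + t *\<^sub>R b) = f ((1 - t) *\<^sub>R (y + a *\<^sub>R d) + t *\<^sub>R (y + b *\<^sub>R d))"
      unfolding g_def by (simp add: algebra_simps)
    also have "\<dots> \<le> (1 - t) * f (y + a *\<^sub>R d) + t * f (y + b *\<^sub>R d)"
      using convexD_alt convex_onD[OF convex, of t] t by auto
    finally show "g ((1 - t) *\<^sub>R a + t *\<^sub>R b) \<le> (1 - t) * g a + t * g b" unfolding g_def .
  qed simp
  have "((\<lambda>t. y + t *\<^sub>R d) has_derivative (\<lambda>t. t *\<^sub>R d)) (at 0)"
    by (auto intro!: derivative_eq_intros)
  moreover have "(f has_derivative (\<lambda>h. inner h (df y))) (at (y + 0 *\<^sub>R d))"
    using grad[of y] by (simp add: gderiv_def)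
  ultimately have "(g has_derivative (\<lambda>t. inner (t *\<^sub>R d) (df y))) (at 0)"
    unfolding g_def using has_derivative_compose[of "\<lambda>t. y + t *\<^sub>R d" "\<lambda>t. t *\<^sub>R d" 0 UNIV f "\<lambda>h. inner h (df y)"] by simp
  then have "(g has_field_derivative inner d (df y)) (at 0 within UNIV)"
    by (rule has_derivative_imp_has_field_derivative) simp
  from convex_on_imp_above_tangent[OF cg _ _ _ this, of 1]
  have "g 1 - g 0 \<ge> inner d (df y)" by simp
  then show ?thesis unfolding g_def d_def by (simp add: inner_commute)
qed

lemma step_ineq:
  fixes k :: nat and s :: "(real^'n) \<times> (real^'n)" and e :: "real^'n"
  assumes e: "norm e = 1"
  defines "y \<equiv> yy k s"
  defines "sc \<equiv> inner (df (yy k s)) e + \<xi> (yy k s)"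
  shows "\<Phi> (Suc k) (step k s e) \<le> \<Phi> k s + aa k * inner (df y) (snd s - xs)
            - aa k * (real CARD('n)) * sc * inner (snd s - xs) e + rstm_A (real CARD('n)) (Suc k) * sc * \<xi> y / L"
proof -
  define x where "x = fst s"
  define u where "u = snd s"
  define a where "a = aa k"
  define Ak where "Ak = rstm_A (real CARD('n)) k"
  define A' where "A' = rstm_A (real CARD('n)) (Suc k)"
  define g where "g = df y"
  define p where "p = inner g e"
  define q where "q = inner (u - xs) e"
  define u' where "u' = u - (a / L) *\<^sub>R (((real CARD('n)) * sc) *\<^sub>R e)"
  define x' where "x' = y + ((real CARD('n)) * a / A') *\<^sub>R (u' - u)"
  have st: "step k s e = (x', u')"
    unfolding step_def x'_def u'_def a_def A'_def u_def y_def sc_def by (simp add: Let_def)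
  have A'eq: "A' = Ak + a" unfolding A'_def Ak_def a_def by (rule A_Suc)
  have apos: "a > 0" unfolding a_def by (rule aa_pos)
  have Ak0: "Ak \<ge> 0" unfolding Ak_def by (rule A_nonneg[OF nn_ge1])
  have A'pos: "A' > 0" using A'eq apos Ak0 by simp
  have na: "(real CARD('n))\<^sup>2 * a\<^sup>2 = A'" unfolding a_def A'_def by (rule aa_eq)
  have sc: "sc = p + \<xi> y" unfolding sc_def p_def g_def y_def by simp
  have coef: "((real CARD('n)) * a / A') * (a / L) * (real CARD('n)) = 1 / L"
    using na A'pos L_pos by (simp add: field_simps power2_eq_square)
  have dx: "x' - y = - (sc / L) *\<^sub>R e"
  proof -
    have "x' - y = - (((real CARD('n)) * a / A') * (a / L) * (real CARD('n)) * sc) *\<^sub>R e"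
      unfolding x'_def u'_def by (simp add: algebra_simps)
    also have "\<dots> = - (sc / L) *\<^sub>R e" using coef by simp
    finally show ?thesis .
  qed
  have fx': "f x' \<le> f y - sc * p / L + sc\<^sup>2 / (2 * L)"
  proof -
    have "f x' \<le> f y + inner g (x' - y) + L / 2 * (norm (x' - y))\<^sup>2"
      unfolding g_def by (rule smooth)
    also have "inner g (x' - y) = - sc * p / L" unfolding dx p_def by simp
    also have "L / 2 * (norm (x' - y))\<^sup>2 = sc\<^sup>2 / (2 * L)"
      unfolding dx using e L_pos by (simp add: power2_eq_square field_simps)
    finally show ?thesis by simp
  qed
  have nu': "L / 2 * (norm (u' - xs))\<^sup>2 = L / 2 * (norm (u - xs))\<^sup>2 - a * (real CARD('n)) * sc * q + A' * sc\<^sup>2 / (2 * L)"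
  proof -
    define c where "c = (a / L) * ((real CARD('n)) * sc)"
    have eqv: "u' - xs = (u - xs) - c *\<^sub>R e" unfolding u'_def c_def by simp
    have "(norm (u' - xs))\<^sup>2 = (norm (u - xs))\<^sup>2 - 2 * c * q + c\<^sup>2"
      using e norm_sub_sq[of "u - xs" c e] unfolding q_def eqv by simp
    then have "L / 2 * (norm (u' - xs))\<^sup>2 = L / 2 * ((norm (u - xs))\<^sup>2 - 2 * c * q + c\<^sup>2)"
      by simp
    also have "\<dots> = L / 2 * (norm (u - xs))\<^sup>2 - (L * c) * q + L * c\<^sup>2 / 2"
      by (simp add: algebra_simps)
    finally have "L / 2 * (norm (u' - xs))\<^sup>2 = L / 2 * (norm (u - xs))\<^sup>2 - (L * c) * q + L * c\<^sup>2 / 2" .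
    moreover have "L * c = a * (real CARD('n)) * sc" unfolding c_def using L_pos by simp
    moreover have "L * c\<^sup>2 / 2 = A' * sc\<^sup>2 / (2 * L)"
      unfolding c_def na[symmetric] using L_pos by (simp add: field_simps power2_eq_square)
    ultimately show ?thesis by simp
  qed
  have yeq: "A' *\<^sub>R y = a *\<^sub>R u + Ak *\<^sub>R x"
    unfolding y_def yy_def A'_def a_def Ak_def u_def x_def using A'pos[unfolded A'_def] by simp
  have gy: "A' * inner g y = a * inner g u + Ak * inner g x"
    using arg_cong[OF yeq, of "inner g"] by (simp add: inner_simps)
  have c1: "f y - f x \<le> inner g y - inner g x"
    using grad_ineq[of y x] unfolding g_def by (simp add: inner_simps)
  have c2: "f y - f xs \<le> inner g y - inner g xs"
    using grad_ineq[of y xs] unfolding g_def by (simp add: inner_simps)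
  have m1: "Ak * (f y - f x) \<le> Ak * (inner g y - inner g x)" using c1 Ak0 by (rule mult_left_mono)
  have m2: "a * (f y - f xs) \<le> a * (inner g y - inner g xs)" using c2 apos by (intro mult_left_mono) auto
  have key: "A' * f y - A' * f xs \<le> Ak * (f x - f xs) + a * inner g u - a * inner g xs"
    using m1 m2 gy A'eq by (simp add: algebra_simps)
  have scq: "sc\<^sup>2 - sc * p = sc * \<xi> y" unfolding sc by (simp add: power2_eq_square algebra_simps)
  define T1 where "T1 = A' * sc\<^sup>2 / L"
  define T2 where "T2 = A' * sc * p / L"
  have m3: "A' * f x' \<le> A' * f y - T2 + T1 / 2"
  proof -
    have "A' * f x' \<le> A' * (f y - sc * p / L + sc\<^sup>2 / (2 * L))"
      using fx' A'pos by (intro mult_left_mono) auto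
    also have "\<dots> = A' * f y - T2 + T1 / 2" unfolding T1_def T2_def by (simp add: algebra_simps)
    finally show ?thesis .
  qed
  have nu'': "L / 2 * (norm (u' - xs))\<^sup>2 = L / 2 * (norm (u - xs))\<^sup>2 - a * (real CARD('n)) * sc * q + T1 / 2"
    using nu' unfolding T1_def by simp
  have T12: "T1 - T2 = A' * (sc * \<xi> y) / L"
    unfolding T1_def T2_def scq[symmetric] by (simp add: algebra_simps diff_divide_distrib)
  have "\<Phi> (Suc k) (step k s e) = A' * (f x' - f xs) + L / 2 * (norm (u' - xs))\<^sup>2"
    unfolding \<Phi>_def st A'_def by simp
  also have "\<dots> \<le> Ak * (f x - f xs) + a * inner g u - a * inner g xs + A' * (sc * \<xi> y) / L + L / 2 * (norm (u - xs))\<^sup>2 - a * (real CARD('n)) * sc * q"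
    using key m3 nu'' T12 right_diff_distrib[of A' "f x'" "f xs"] by argo
  also have "\<dots> = \<Phi> k s + aa k * inner (df y) (snd s - xs)
            - aa k * (real CARD('n)) * sc * inner (snd s - xs) e + rstm_A (real CARD('n)) (Suc k) * sc * \<xi> y / L"
    unfolding \<Phi>_def Ak_def x_def u_def a_def g_def A'_def q_def by (simp add: inner_simps algebra_simps)
  finally show ?thesis .
qed

end


lemma integrable_quad: "integrable (unif_sphere::(real^'n::finite) measure)
   (\<lambda>e. C + c1 * (inner g e * inner w e) + c2 * inner w e + c3 * inner g e)"
proof -
  interpret prob_space "unif_sphere::(real^'n) measure" by (rule sphere_prob)
  show ?thesis
    by (intro Bochner_Integration.integrable_add integrable_mult_right integrable_const
        integrable_inner1 integrable_inner2)
qed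

lemma integral_quad: "(\<integral>e. C + c1 * (inner g e * inner w e) + c2 * inner w e + c3 * inner g e
     \<partial>(unif_sphere::(real^'n::finite) measure)) = C + c1 * inner g w / real CARD('n)"
proof -
  interpret prob_space "unif_sphere::(real^'n) measure" by (rule sphere_prob)
  have i1: "integrable (unif_sphere::(real^'n) measure) (\<lambda>e. C + c1 * (inner g e * inner w e))"
    by (intro Bochner_Integration.integrable_add integrable_mult_right integrable_const integrable_inner2)
  have i2: "integrable (unif_sphere::(real^'n) measure) (\<lambda>e. C + c1 * (inner g e * inner w e) + c2 * inner w e)"
    by (intro Bochner_Integration.integrable_add integrable_mult_right integrable_const
        integrable_inner1 integrable_inner2)
  have "(\<integral>e. C + c1 * (inner g e * inner w e) + c2 * inner w e + c3 * inner g e \<partial>(unif_sphere::(real^'n) measure))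
     = (\<integral>e. C + c1 * (inner g e * inner w e) + c2 * inner w e \<partial>(unif_sphere::(real^'n) measure))
       + (\<integral>e. c3 * inner g e \<partial>(unif_sphere::(real^'n) measure))"
    by (rule Bochner_Integration.integral_add[OF i2]) (intro integrable_mult_right integrable_inner1)
  also have "(\<integral>e. C + c1 * (inner g e * inner w e) + c2 * inner w e \<partial>(unif_sphere::(real^'n) measure))
     = (\<integral>e. C + c1 * (inner g e * inner w e) \<partial>(unif_sphere::(real^'n) measure))
       + (\<integral>e. c2 * inner w e \<partial>(unif_sphere::(real^'n) measure))"
    by (rule Bochner_Integration.integral_add[OF i1]) (intro integrable_mult_right integrable_inner1)
  also have "(\<integral>e. C + c1 * (inner g e * inner w e) \<partial>(unif_sphere::(real^'n) measure))
     = (\<integral>e. C \<partial>(unif_sphere::(real^'n) measure))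
       + (\<integral>e. c1 * (inner g e * inner w e) \<partial>(unif_sphere::(real^'n) measure))"
    by (rule Bochner_Integration.integral_add) (intro integrable_const, intro integrable_mult_right integrable_inner2)
  moreover have "prob UNIV = 1" using prob_space by simp
  ultimately show ?thesis
    by (simp add: mom_inner1 mom_inner2)
qed

context rstm_setting begin

lemma Phi_nonneg: "\<Phi> k s \<ge> 0"
  unfolding \<Phi>_def using A_nonneg[OF nn_ge1, of k] min[of "fst s"] L_pos by simp

lemma Delta_nonneg: "\<Delta> \<ge> 0"
  using xi_bound[of 0] by simp

lemma exp_step:
  "(\<integral>\<^sup>+e. ennreal (\<Phi> (Suc k) (step k s e)) \<partial>unif_sphere)
     \<le> ennreal (\<Phi> k s + rstm_A (real CARD('n)) (Suc k) * \<Delta>\<^sup>2 / L)"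
proof -
  define y where "y = yy k s"
  define g where "g = df y"
  define w where "w = snd s - xs"
  define A' where "A' = rstm_A (real CARD('n)) (Suc k)"
  define a where "a = aa k"
  define C where "C = \<Phi> k s + a * inner g w + A' * (\<xi> y)\<^sup>2 / L"
  define c1 where "c1 = - a * real CARD('n)"
  define c2 where "c2 = - a * real CARD('n) * \<xi> y"
  define c3 where "c3 = A' * \<xi> y / L"
  define R where "R = (\<lambda>e. C + c1 * (inner g e * inner w e) + c2 * inner w e + c3 * inner g e)"
  have AE: "AE e in unif_sphere. \<Phi> (Suc k) (step k s e) \<le> R e"
    using sphere_norm
  proof eventually_elim
    case (elim e)
    have "\<Phi> (Suc k) (step k s e) \<le> \<Phi> k s + a * inner g w
            - a * real CARD('n) * (inner g e + \<xi> y) * inner w e + A' * (inner g e + \<xi> y) * \<xi> y / L"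
      using step_ineq[OF elim, of k s] unfolding y_def g_def w_def A'_def a_def .
    also have "\<dots> = R e"
      unfolding R_def C_def c1_def c2_def c3_def
      by (simp add: inner_commute[of w e] algebra_simps power2_eq_square add_divide_distrib)
    finally show ?case .
  qed
  have intR: "integrable unif_sphere R" unfolding R_def by (rule integrable_quad)
  have IR: "(\<integral>e. R e \<partial>unif_sphere) = \<Phi> k s + A' * (\<xi> y)\<^sup>2 / L"
    unfolding R_def integral_quad C_def c1_def using nn_ge1 by simp
  have Rnn: "AE e in unif_sphere. 0 \<le> R e"
    using AE by eventually_elim (use Phi_nonneg in \<open>blast intro: order_trans\<close>)
  have "(\<integral>\<^sup>+e. ennreal (\<Phi> (Suc k) (step k s e)) \<partial>unif_sphere) \<le> (\<integral>\<^sup>+e. ennreal (R e) \<partial>unif_sphere)"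
    by (rule nn_integral_mono_AE) (use AE in \<open>eventually_elim, simp add: ennreal_leI\<close>)
  also have "\<dots> = ennreal (\<integral>e. R e \<partial>unif_sphere)"
    by (rule nn_integral_eq_integral[OF intR Rnn])
  also have "\<dots> \<le> ennreal (\<Phi> k s + rstm_A (real CARD('n)) (Suc k) * \<Delta>\<^sup>2 / L)"
  proof (rule ennreal_leI)
    have "(\<xi> y)\<^sup>2 \<le> \<Delta>\<^sup>2" using xi_bound[of y] by (metis abs_ge_zero power2_abs power_mono)
    moreover have "A' \<ge> 0" unfolding A'_def by (rule A_nonneg[OF nn_ge1])
    ultimately have "A' * (\<xi> y)\<^sup>2 / L \<le> A' * \<Delta>\<^sup>2 / L"
      using L_pos by (intro divide_right_mono mult_left_mono) auto
    then show "(\<integral>e. R e \<partial>unif_sphere) \<le> \<Phi> k s + rstm_A (real CARD('n)) (Suc k) * \<Delta>\<^sup>2 / L"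
      unfolding IR A'_def by simp
  qed
  finally show ?thesis .
qed

end


context rstm_setting begin

lemma f_cont: "continuous_on UNIV f"
proof (rule continuous_at_imp_continuous_on, intro ballI)
  fix x show "isCont f x" using grad[of x] unfolding gderiv_def by (rule has_derivative_continuous)
qed

lemma f_meas[measurable]: "f \<in> borel_measurable borel"
  by (rule borel_measurable_continuous_onI[OF f_cont])

lemma dir_deriv: "((\<lambda>t. f (x + t *\<^sub>R v)) has_field_derivative inner v (df x)) (at 0)"
proof -
  have "((\<lambda>t. x + t *\<^sub>R v) has_derivative (\<lambda>t. t *\<^sub>R v)) (at 0)"
    by (auto intro!: derivative_eq_intros)
  moreover have "(f has_derivative (\<lambda>h. inner h (df x))) (at (x + 0 *\<^sub>R v))"
    using grad[of x] by (simp add: gderiv_def)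
  ultimately have "((\<lambda>t. f (x + t *\<^sub>R v)) has_derivative (\<lambda>t. inner (t *\<^sub>R v) (df x))) (at 0)"
    using has_derivative_compose[of "\<lambda>t. x + t *\<^sub>R v" "\<lambda>t. t *\<^sub>R v" 0 UNIV f "\<lambda>h. inner h (df x)"] by simp
  then show ?thesis
    by (rule has_derivative_imp_has_field_derivative) simp
qed

lemma df_comp_meas: "(\<lambda>x. df x $ i) \<in> borel_measurable borel"
proof (rule borel_measurable_LIMSEQ_real)
  let ?v = "axis i (1::real) :: real^'n"
  fix x :: "real^'n"
  have "(\<lambda>h. (f (x + (0 + h) *\<^sub>R ?v) - f (x + 0 *\<^sub>R ?v)) / h) \<midarrow>0\<rightarrow> inner ?v (df x)"
    using dir_deriv[of x ?v] unfolding DERIV_def .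
  then have lim0: "(\<lambda>h. (f (x + h *\<^sub>R ?v) - f x) / h) \<midarrow>0\<rightarrow> df x $ i"
    by (simp add: inner_axis')
  then have "(\<lambda>m. (\<lambda>h. (f (x + h *\<^sub>R ?v) - f x) / h) (inverse (real (Suc m)))) \<longlonglongrightarrow> df x $ i"
  proof -
    note H = iffD2[OF LIMSEQ_SEQ_conv[of 0 "\<lambda>h. (f (x + h *\<^sub>R ?v) - f x) / h" "df x $ i"], OF lim0]
    have "(\<forall>n. inverse (real (Suc n)) \<noteq> 0) \<and> (\<lambda>n. inverse (real (Suc n))) \<longlonglongrightarrow> 0"
      using LIMSEQ_inverse_real_of_nat by simp
    from H[rule_format, OF this] show ?thesis by simp
  qed
  then show "(\<lambda>m. (f (x + inverse (real (Suc m)) *\<^sub>R ?v) - f x) / inverse (real (Suc m))) \<longlonglongrightarrow> df x $ i"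
    by simp
next
  fix m :: nat
  show "(\<lambda>x. (f (x + inverse (real (Suc m)) *\<^sub>R axis i (1::real)) - f x) / inverse (real (Suc m))) \<in> borel_measurable borel"
    by simp
qed

lemma df_meas[measurable]: "df \<in> borel_measurable borel"
proof -
  have "\<forall>b\<in>Basis. (\<lambda>x. df x \<bullet> b) \<in> borel_measurable borel"
  proof
    fix b :: "real^'n" assume "b \<in> Basis"
    then obtain j where b: "b = axis j 1" by (auto simp: Basis_vec_def)
    have "(\<lambda>x. df x $ j) \<in> borel_measurable borel" by (rule df_comp_meas)
    then show "(\<lambda>x. df x \<bullet> b) \<in> borel_measurable borel"
      unfolding b by (simp add: cart_eq_inner_axis)
  qed
  then show ?thesis using borel_measurable_euclidean_space by blast
qed

lemma xi_meas'[measurable]: "\<xi> \<in> borel_measurable borel" by (rule xi_meas)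

lemma step_meas:
  fixes X U E :: "'b \<Rightarrow> real^'n"
  assumes [measurable]: "X \<in> borel_measurable M" "U \<in> borel_measurable M" "E \<in> borel_measurable M"
  shows "(\<lambda>\<omega>. fst (step k (X \<omega>, U \<omega>) (E \<omega>))) \<in> borel_measurable M"
    and "(\<lambda>\<omega>. snd (step k (X \<omega>, U \<omega>) (E \<omega>))) \<in> borel_measurable M"
  unfolding step_def yy_def Let_def by simp_all

lemma Phi_meas:
  fixes X U :: "'b \<Rightarrow> real^'n"
  assumes [measurable]: "X \<in> borel_measurable M" "U \<in> borel_measurable M"
  shows "(\<lambda>\<omega>. \<Phi> k (X \<omega>, U \<omega>)) \<in> borel_measurable M"
  unfolding \<Phi>_def by simp

end


lemma seq_space: "sequence_space (unif_sphere :: ('a::euclidean_space) measure)"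
  unfolding sequence_space_def product_prob_space_def product_prob_space_axioms_def product_sigma_finite_def
  using sphere_prob prob_space_imp_sigma_finite by auto

lemma comp_meas_seq: "(\<lambda>\<omega>. \<omega> k) \<in> borel_measurable (sphere_seq_space :: (nat \<Rightarrow> 'a::euclidean_space) measure)"
proof -
  have "(\<lambda>\<omega>. \<omega> k) \<in> measurable (sphere_seq_space :: (nat \<Rightarrow> 'a) measure) unif_sphere"
    unfolding sphere_seq_space_def by (rule measurable_component_singleton) simp
  then show ?thesis by (simp add: measurable_cong_sets[OF refl sphere_sets])
qed

context rstm_setting begin

lemma Phi_step_meas:
  fixes X U E :: "'b \<Rightarrow> real^'n"
  assumes "X \<in> borel_measurable M" "U \<in> borel_measurable M" "E \<in> borel_measurable M"
  shows "(\<lambda>\<omega>. \<Phi> (Suc k) (step k (X \<omega>, U \<omega>) (E \<omega>))) \<in> borel_measurable M"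
proof -
  have "(\<lambda>\<omega>. \<Phi> (Suc k) (fst (step k (X \<omega>, U \<omega>) (E \<omega>)), snd (step k (X \<omega>, U \<omega>) (E \<omega>)))) \<in> borel_measurable M"
    by (rule Phi_meas[where X="\<lambda>\<omega>. fst (step k (X \<omega>, U \<omega>) (E \<omega>))" and U="\<lambda>\<omega>. snd (step k (X \<omega>, U \<omega>) (E \<omega>))",
          OF step_meas(1)[OF assms, where k=k] step_meas(2)[OF assms, where k=k]])
  then show ?thesis by simp
qed

lemma st_meas: "(\<lambda>\<omega>. fst (st u0 k \<omega>)) \<in> borel_measurable sphere_seq_space \<and>
                (\<lambda>\<omega>. snd (st u0 k \<omega>)) \<in> borel_measurable sphere_seq_space"
proof (induction k)
  case 0 then show ?case by simp
next
  case (Suc k)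
  have e: "(\<lambda>\<omega>::nat \<Rightarrow> real^'n. \<omega> k) \<in> borel_measurable sphere_seq_space" by (rule comp_meas_seq)
  have "(\<lambda>\<omega>. fst (step k (fst (st u0 k \<omega>), snd (st u0 k \<omega>)) (\<omega> k))) \<in> borel_measurable sphere_seq_space \<and>
        (\<lambda>\<omega>. snd (step k (fst (st u0 k \<omega>), snd (st u0 k \<omega>)) (\<omega> k))) \<in> borel_measurable sphere_seq_space"
    using step_meas[OF Suc.IH[THEN conjunct1] Suc.IH[THEN conjunct2] e] by blast
  then show ?case by simp
qed

lemma st_local: "(\<And>j. j < k \<Longrightarrow> \<omega> j = \<omega>' j) \<Longrightarrow> st u0 k \<omega> = st u0 k \<omega>'"
  by (induction k) auto

lemma Phi_st_meas: "(\<lambda>\<omega>. \<Phi> k (st u0 k \<omega>)) \<in> borel_measurable sphere_seq_space"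
  using Phi_meas[OF st_meas[of u0 k, THEN conjunct1] st_meas[of u0 k, THEN conjunct2], of k] by simp

lemma nn_step:
  "(\<integral>\<^sup>+\<omega>. ennreal (\<Phi> (Suc k) (st u0 (Suc k) \<omega>)) \<partial>sphere_seq_space)
     \<le> (\<integral>\<^sup>+\<omega>. ennreal (\<Phi> k (st u0 k \<omega>)) \<partial>sphere_seq_space) + ennreal (rstm_A (real CARD('n)) (Suc k) * \<Delta>\<^sup>2 / L)"
proof -
  interpret sequence_space "unif_sphere :: (real^'n) measure" by (rule seq_space)
  have SS: "sphere_seq_space = S" by (simp add: sphere_seq_space_def)
  define H where "H = (\<lambda>(\<omega>::nat \<Rightarrow> real^'n) e. ennreal (\<Phi> (Suc k) (step k (st u0 k \<omega>) e)))"
  define c where "c = rstm_A (real CARD('n)) (Suc k) * \<Delta>\<^sup>2 / L"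
  have Hm: "(\<lambda>\<omega>. H \<omega> (\<omega> k)) \<in> borel_measurable S"
  proof -
    have "(\<lambda>\<omega>. \<Phi> (Suc k) (step k (fst (st u0 k \<omega>), snd (st u0 k \<omega>)) (\<omega> k))) \<in> borel_measurable S"
      using Phi_step_meas[OF st_meas[of u0 k, THEN conjunct1] st_meas[of u0 k, THEN conjunct2] comp_meas_seq, of k k] SS by simp
    then show ?thesis unfolding H_def by simp
  qed
  have Hm2: "(\<lambda>p. H (fst p) (snd p 0)) \<in> borel_measurable (S \<Otimes>\<^sub>M S)"
  proof -
    have a: "(\<lambda>p. fst (st u0 k (fst p))) \<in> borel_measurable (S \<Otimes>\<^sub>M S)"
      using measurable_compose[OF measurable_fst st_meas[of u0 k, THEN conjunct1]] SS by (simp add: comp_def)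
    have b: "(\<lambda>p. snd (st u0 k (fst p))) \<in> borel_measurable (S \<Otimes>\<^sub>M S)"
      using measurable_compose[OF measurable_fst st_meas[of u0 k, THEN conjunct2]] SS by (simp add: comp_def)
    have d: "(\<lambda>p::(nat \<Rightarrow> real^'n) \<times> (nat \<Rightarrow> real^'n). snd p 0) \<in> borel_measurable (S \<Otimes>\<^sub>M S)"
      using measurable_compose[OF measurable_snd comp_meas_seq] SS by (simp add: comp_def)
    show ?thesis using Phi_step_meas[OF a b d, of k] unfolding H_def by simp
  qed
  have Hm3: "H \<omega> \<in> borel_measurable unif_sphere" for \<omega>
  proof -
    have "(\<lambda>e. \<Phi> (Suc k) (step k (fst (st u0 k \<omega>), snd (st u0 k \<omega>)) e)) \<in> borel_measurable unif_sphere"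
      by (rule Phi_step_meas) (auto simp: measurable_cong_sets[OF refl sphere_sets])
    then show ?thesis unfolding H_def by simp
  qed
  have "(\<integral>\<^sup>+\<omega>. ennreal (\<Phi> (Suc k) (st u0 (Suc k) \<omega>)) \<partial>S) = (\<integral>\<^sup>+\<omega>. H \<omega> (\<omega> k) \<partial>S)"
    unfolding H_def by simp
  also have "\<dots> = (\<integral>\<^sup>+\<omega>. H \<omega> (\<omega> k) \<partial>distr (S \<Otimes>\<^sub>M S) S (\<lambda>(\<omega>, \<omega>'). comb_seq k \<omega> \<omega>'))"
    by (simp add: PiM_comb_seq)
  also have "\<dots> = (\<integral>\<^sup>+p. H (comb_seq k (fst p) (snd p)) (comb_seq k (fst p) (snd p) k) \<partial>(S \<Otimes>\<^sub>M S))"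
    by (subst nn_integral_distr) (auto simp: measurable_comb_seq Hm case_prod_beta)
  also have "\<dots> = (\<integral>\<^sup>+p. H (fst p) (snd p 0) \<partial>(S \<Otimes>\<^sub>M S))"
  proof (rule nn_integral_cong)
    fix p :: "(nat \<Rightarrow> real^'n) \<times> (nat \<Rightarrow> real^'n)"
    have "st u0 k (comb_seq k (fst p) (snd p)) = st u0 k (fst p)"
      by (rule st_local) (simp add: comb_seq_less)
    moreover have "comb_seq k (fst p) (snd p) k = snd p 0"
      using comb_seq_add[of k "fst p" "snd p" 0] by simp
    ultimately show "H (comb_seq k (fst p) (snd p)) (comb_seq k (fst p) (snd p) k) = H (fst p) (snd p 0)"
      unfolding H_def by simp
  qed
  also have "\<dots> = (\<integral>\<^sup>+\<omega>. \<integral>\<^sup>+\<omega>'. H \<omega> (\<omega>' 0) \<partial>S \<partial>S)"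
    using sigma_finite_measure.nn_integral_fst[OF prob_space_imp_sigma_finite[OF P.prob_space_axioms] Hm2]
    by simp
  also have "\<dots> = (\<integral>\<^sup>+\<omega>. \<integral>\<^sup>+e. H \<omega> e \<partial>unif_sphere \<partial>S)"
  proof (rule nn_integral_cong)
    fix \<omega> :: "nat \<Rightarrow> real^'n"
    have "(\<integral>\<^sup>+e. H \<omega> e \<partial>unif_sphere) = (\<integral>\<^sup>+e. H \<omega> e \<partial>distr S unif_sphere (\<lambda>\<omega>'. \<omega>' 0))"
    proof -
      have "distr S (unif_sphere::(real^'n) measure) (\<lambda>\<omega>'. \<omega>' 0) = unif_sphere"
        by (rule distr_PiM_component) (auto intro: sphere_prob)
      then show ?thesis by simp
    qed
    also have "\<dots> = (\<integral>\<^sup>+\<omega>'. H \<omega> (\<omega>' 0) \<partial>S)"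
      by (rule nn_integral_distr) (auto intro: measurable_component_singleton Hm3)
    finally show "(\<integral>\<^sup>+\<omega>'. H \<omega> (\<omega>' 0) \<partial>S) = (\<integral>\<^sup>+e. H \<omega> e \<partial>unif_sphere)" by simp
  qed
  also have "\<dots> \<le> (\<integral>\<^sup>+\<omega>. ennreal (\<Phi> k (st u0 k \<omega>)) + ennreal c \<partial>S)"
  proof (rule nn_integral_mono)
    fix \<omega> :: "nat \<Rightarrow> real^'n"
    have "(\<integral>\<^sup>+e. H \<omega> e \<partial>unif_sphere) \<le> ennreal (\<Phi> k (st u0 k \<omega>) + c)"
      unfolding H_def c_def by (rule exp_step)
    also have "\<dots> = ennreal (\<Phi> k (st u0 k \<omega>)) + ennreal c"
      using Phi_nonneg L_pos A_nonneg[OF nn_ge1, of "Suc k"] unfolding c_def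
      by (intro ennreal_plus) (auto simp del: rstm_A.simps)
    finally show "(\<integral>\<^sup>+e. H \<omega> e \<partial>unif_sphere) \<le> ennreal (\<Phi> k (st u0 k \<omega>)) + ennreal c" .
  qed
  also have "\<dots> = (\<integral>\<^sup>+\<omega>. ennreal (\<Phi> k (st u0 k \<omega>)) \<partial>S) + ennreal c"
  proof -
    have e1: "emeasure S (space S) = 1" by (rule P.emeasure_space_1)
    show ?thesis using Phi_st_meas[unfolded SS] by (subst nn_integral_add) (auto simp: e1)
  qed
  finally show ?thesis unfolding SS c_def .
qed

end


lemma final_arith:
  fixes n Ak P2 D \<Delta> L k E :: real
  assumes n: "n \<ge> 1" and L: "L > 0" and P2: "P2 \<ge> 0" and Dl: "\<Delta> \<ge> 0"
    and Ak: "Ak \<ge> (D / (2 * n))\<^sup>2" and D: "D > 0" and kD: "k \<le> D\<^sup>2" and k0: "k \<ge> 0"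
    and E: "E \<le> P2 / Ak + k * \<Delta>\<^sup>2 / L"
  shows "(\<Delta> \<le> sqrt P2 * sqrt L / (4 * n * Ak) \<longrightarrow> E \<le> 6 * n\<^sup>2 * P2 / D\<^sup>2)
       \<and> E \<le> 8 * n\<^sup>2 * P2 / D\<^sup>2 + 4 / L * D\<^sup>2 * \<Delta>\<^sup>2"
proof -
  define a where "a = 1 / Ak"
  have Dn: "(D / (2 * n))\<^sup>2 = D\<^sup>2 / (4 * n\<^sup>2)" using n by (simp add: power_divide power_mult_distrib)
  have Akpos: "Ak > 0" using Ak D n Dn by (smt (verit) divide_pos_pos zero_less_power)
  have apos: "a > 0" unfolding a_def using Akpos by simp
  have ale: "a \<le> 4 * n\<^sup>2 / D\<^sup>2"
  proof -
    have "D\<^sup>2 / (4 * n\<^sup>2) \<le> Ak" using Ak Dn by simp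
    then have "1 / Ak \<le> 1 / (D\<^sup>2 / (4 * n\<^sup>2))"
      using D n Akpos by (intro divide_left_mono) auto
    then show ?thesis unfolding a_def by simp
  qed
  have t1: "P2 / Ak \<le> 4 * n\<^sup>2 * P2 / D\<^sup>2"
  proof -
    have "P2 / Ak = P2 * a" unfolding a_def by simp
    also have "\<dots> \<le> P2 * (4 * n\<^sup>2 / D\<^sup>2)" using ale P2 by (rule mult_left_mono)
    finally show ?thesis by (simp add: mult.commute)
  qed
  have part2: "E \<le> 8 * n\<^sup>2 * P2 / D\<^sup>2 + 4 / L * D\<^sup>2 * \<Delta>\<^sup>2"
  proof -
    have "k * \<Delta>\<^sup>2 / L \<le> (4 * D\<^sup>2) * \<Delta>\<^sup>2 / L"
    proof -
      have "k \<le> 4 * D\<^sup>2" using kD zero_le_power2[of D] by linarith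
      then show ?thesis using L by (intro divide_right_mono mult_right_mono) auto
    qed
    moreover have "4 * n\<^sup>2 * P2 / D\<^sup>2 \<le> 8 * n\<^sup>2 * P2 / D\<^sup>2"
      using P2 D by (intro divide_right_mono) auto
    ultimately show ?thesis using E t1 by (simp add: field_simps)
  qed
  have part1: "E \<le> 6 * n\<^sup>2 * P2 / D\<^sup>2" if hD: "\<Delta> \<le> sqrt P2 * sqrt L / (4 * n * Ak)"
  proof -
    have "\<Delta>\<^sup>2 \<le> (sqrt P2 * sqrt L / (4 * n * Ak))\<^sup>2"
      using hD Dl by (intro power_mono) auto
    also have "\<dots> = P2 * L * a\<^sup>2 / (16 * n\<^sup>2)"
      unfolding a_def using P2 L n Akpos by (simp add: power_divide power_mult_distrib field_simps)
    finally have d2: "\<Delta>\<^sup>2 \<le> P2 * L * a\<^sup>2 / (16 * n\<^sup>2)" .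
    have "k * \<Delta>\<^sup>2 / L \<le> k * (P2 * L * a\<^sup>2 / (16 * n\<^sup>2)) / L"
      using d2 k0 L by (intro divide_right_mono mult_left_mono) auto
    also have "\<dots> = k * P2 * a\<^sup>2 / (16 * n\<^sup>2)" using L by (simp add: field_simps)
    also have "\<dots> \<le> k * P2 * (4 * n\<^sup>2 / D\<^sup>2)\<^sup>2 / (16 * n\<^sup>2)"
      using ale apos k0 P2 by (intro divide_right_mono mult_left_mono power_mono) auto
    also have "\<dots> = k * (P2 * n\<^sup>2 / D\<^sup>2 / D\<^sup>2)"
      using n D by (simp add: power_divide power_mult_distrib field_simps power2_eq_square)
    also have "\<dots> \<le> D\<^sup>2 * (P2 * n\<^sup>2 / D\<^sup>2 / D\<^sup>2)"
      using kD P2 D by (intro mult_right_mono) auto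
    also have "\<dots> = n\<^sup>2 * P2 / D\<^sup>2" using D by (simp add: field_simps power2_eq_square)
    finally have "k * \<Delta>\<^sup>2 / L \<le> n\<^sup>2 * P2 / D\<^sup>2" .
    moreover have "4 * n\<^sup>2 * P2 / D\<^sup>2 + n\<^sup>2 * P2 / D\<^sup>2 \<le> 6 * n\<^sup>2 * P2 / D\<^sup>2"
      using P2 D by (simp add: field_simps)
    ultimately show ?thesis using E t1 by linarith
  qed
  show ?thesis using part1 part2 by blast
qed


context rstm_setting begin

lemma seq_prob: "prob_space (sphere_seq_space :: (nat \<Rightarrow> real^'n) measure)"
proof -
  interpret sequence_space "unif_sphere :: (real^'n) measure" by (rule seq_space)
  show ?thesis unfolding sphere_seq_space_def by (rule P.prob_space_axioms)
qed

lemma nn_bound: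
  "(\<integral>\<^sup>+\<omega>. ennreal (\<Phi> k (st u0 k \<omega>)) \<partial>sphere_seq_space)
     \<le> ennreal (\<Phi> 0 (u0, u0) + \<Delta>\<^sup>2 / L * (\<Sum>j\<in>{1..k}. rstm_A (real CARD('n)) j))"
proof (induction k)
  case 0
  interpret prob_space "sphere_seq_space :: (nat \<Rightarrow> real^'n) measure" by (rule seq_prob)
  show ?case by (simp add: emeasure_space_1)
next
  case (Suc k)
  have "(\<integral>\<^sup>+\<omega>. ennreal (\<Phi> (Suc k) (st u0 (Suc k) \<omega>)) \<partial>sphere_seq_space)
      \<le> ennreal (\<Phi> 0 (u0, u0) + \<Delta>\<^sup>2 / L * (\<Sum>j\<in>{1..k}. rstm_A (real CARD('n)) j))
        + ennreal (rstm_A (real CARD('n)) (Suc k) * \<Delta>\<^sup>2 / L)"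
    using nn_step[of k u0] Suc.IH by (meson add_right_mono order_trans)
  also have "\<dots> = ennreal (\<Phi> 0 (u0, u0) + \<Delta>\<^sup>2 / L * (\<Sum>j\<in>{1..k}. rstm_A (real CARD('n)) j)
        + rstm_A (real CARD('n)) (Suc k) * \<Delta>\<^sup>2 / L)"
  proof (rule ennreal_plus[symmetric])
    have "(\<Sum>j\<in>{1..k}. rstm_A (real CARD('n)) j) \<ge> 0"
      by (intro sum_nonneg A_nonneg[OF nn_ge1])
    then show "0 \<le> \<Phi> 0 (u0, u0) + \<Delta>\<^sup>2 / L * (\<Sum>j\<in>{1..k}. rstm_A (real CARD('n)) j)"
      using Phi_nonneg[of 0 "(u0,u0)"] L_pos by simp
    show "0 \<le> rstm_A (real CARD('n)) (Suc k) * \<Delta>\<^sup>2 / L"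
      using A_nonneg[OF nn_ge1, of "Suc k"] L_pos by (simp del: rstm_A.simps)
  qed
  also have "\<Phi> 0 (u0, u0) + \<Delta>\<^sup>2 / L * (\<Sum>j\<in>{1..k}. rstm_A (real CARD('n)) j)
        + rstm_A (real CARD('n)) (Suc k) * \<Delta>\<^sup>2 / L
      = \<Phi> 0 (u0, u0) + \<Delta>\<^sup>2 / L * (\<Sum>j\<in>{1..Suc k}. rstm_A (real CARD('n)) j)"
    by (simp add: sum.cl_ivl_Suc algebra_simps del: rstm_A.simps)
  finally show ?case .
qed

lemma exp_bound:
  assumes k: "k \<ge> 1"
  shows "(\<integral>\<omega>. f (fst (st u0 k \<omega>)) \<partial>sphere_seq_space) - f xs
     \<le> \<Phi> 0 (u0, u0) / rstm_A (real CARD('n)) k + real k * \<Delta>\<^sup>2 / L"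
proof -
  interpret prob_space "sphere_seq_space :: (nat \<Rightarrow> real^'n) measure" by (rule seq_prob)
  define Ak where "Ak = rstm_A (real CARD('n)) k"
  define B where "B = \<Phi> 0 (u0, u0) + \<Delta>\<^sup>2 / L * (\<Sum>j\<in>{1..k}. rstm_A (real CARD('n)) j)"
  define Y where "Y = (\<lambda>\<omega>. f (fst (st u0 k \<omega>)) - f xs)"
  have Ak1: "Ak \<ge> 1" unfolding Ak_def using A_mono[OF nn_ge1 k] A_one[OF nn_ge1] by simp
  have Y0: "Y \<omega> \<ge> 0" for \<omega> unfolding Y_def using min by simp
  have Ym[measurable]: "Y \<in> borel_measurable sphere_seq_space"
    unfolding Y_def using st_meas[of u0 k, THEN conjunct1] by simp
  have B0: "B \<ge> 0"
  proof -
    have "(\<Sum>j\<in>{1..k}. rstm_A (real CARD('n)) j) \<ge> 0"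
      by (intro sum_nonneg A_nonneg[OF nn_ge1])
    then show ?thesis unfolding B_def using Phi_nonneg[of 0 "(u0,u0)"] L_pos by simp
  qed
  have "ennreal Ak * (\<integral>\<^sup>+\<omega>. ennreal (Y \<omega>) \<partial>sphere_seq_space)
      = (\<integral>\<^sup>+\<omega>. ennreal (Ak * Y \<omega>) \<partial>sphere_seq_space)"
    using Ak1 Y0 by (subst nn_integral_cmult[symmetric]) (auto simp: ennreal_mult)
  also have "\<dots> \<le> (\<integral>\<^sup>+\<omega>. ennreal (\<Phi> k (st u0 k \<omega>)) \<partial>sphere_seq_space)"
  proof (rule nn_integral_mono, rule ennreal_leI)
    fix \<omega>
    show "Ak * Y \<omega> \<le> \<Phi> k (st u0 k \<omega>)"
      unfolding Y_def \<Phi>_def Ak_def using L_pos by simp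
  qed
  also have "\<dots> \<le> ennreal B" unfolding B_def by (rule nn_bound)
  finally have h: "ennreal Ak * (\<integral>\<^sup>+\<omega>. ennreal (Y \<omega>) \<partial>sphere_seq_space) \<le> ennreal B" .
  have fin: "(\<integral>\<^sup>+\<omega>. ennreal (Y \<omega>) \<partial>sphere_seq_space) \<le> ennreal (B / Ak)"
  proof -
    have "(\<integral>\<^sup>+\<omega>. ennreal (Y \<omega>) \<partial>sphere_seq_space) = ennreal (1 / Ak) * (ennreal Ak * (\<integral>\<^sup>+\<omega>. ennreal (Y \<omega>) \<partial>sphere_seq_space))"
      using Ak1 by (simp add: ennreal_mult[symmetric] mult.assoc[symmetric])
    also have "\<dots> \<le> ennreal (1 / Ak) * ennreal B" using h by (rule mult_left_mono) simp
    also have "\<dots> = ennreal (B / Ak)" using Ak1 B0 by (simp add: ennreal_mult[symmetric])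
    finally show ?thesis .
  qed
  have intY: "integrable sphere_seq_space Y"
  proof (rule integrableI_bounded)
    show "(\<integral>\<^sup>+\<omega>. ennreal (norm (Y \<omega>)) \<partial>sphere_seq_space) < \<infinity>"
      using fin Y0 by (simp add: order_le_less_trans)
  qed simp
  have "ennreal (\<integral>\<omega>. Y \<omega> \<partial>sphere_seq_space) = (\<integral>\<^sup>+\<omega>. ennreal (Y \<omega>) \<partial>sphere_seq_space)"
    by (rule nn_integral_eq_integral[symmetric]) (use intY Y0 in auto)
  with fin have "ennreal (\<integral>\<omega>. Y \<omega> \<partial>sphere_seq_space) \<le> ennreal (B / Ak)" by simp
  then have IY: "(\<integral>\<omega>. Y \<omega> \<partial>sphere_seq_space) \<le> B / Ak"
    using B0 Ak1 by (subst (asm) ennreal_le_iff) auto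
  have intf: "integrable sphere_seq_space (\<lambda>\<omega>. f (fst (st u0 k \<omega>)))"
  proof -
    have "integrable sphere_seq_space (\<lambda>\<omega>. Y \<omega> + f xs)" using intY by simp
    then show ?thesis unfolding Y_def by simp
  qed
  have "(\<integral>\<omega>. f (fst (st u0 k \<omega>)) \<partial>sphere_seq_space) - f xs = (\<integral>\<omega>. Y \<omega> \<partial>sphere_seq_space)"
    unfolding Y_def using intf by (simp add: prob_space)
  also have "\<dots> \<le> B / Ak" by (rule IY)
  also have "B / Ak \<le> \<Phi> 0 (u0, u0) / Ak + real k * \<Delta>\<^sup>2 / L"
  proof -
    have "(\<Sum>j\<in>{1..k}. rstm_A (real CARD('n)) j) \<le> (\<Sum>j\<in>{1..k}. Ak)"
      unfolding Ak_def by (intro sum_mono A_mono[OF nn_ge1]) auto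
    also have "\<dots> = real k * Ak" by simp
    finally have s: "(\<Sum>j\<in>{1..k}. rstm_A (real CARD('n)) j) \<le> real k * Ak" .
    have "B / Ak = \<Phi> 0 (u0, u0) / Ak + \<Delta>\<^sup>2 / L * (\<Sum>j\<in>{1..k}. rstm_A (real CARD('n)) j) / Ak"
      unfolding B_def by (simp add: add_divide_distrib)
    also have "\<Delta>\<^sup>2 / L * (\<Sum>j\<in>{1..k}. rstm_A (real CARD('n)) j) / Ak \<le> \<Delta>\<^sup>2 / L * (real k * Ak) / Ak"
      using s L_pos Ak1 by (intro divide_right_mono mult_left_mono) auto
    also have "\<Delta>\<^sup>2 / L * (real k * Ak) / Ak = real k * \<Delta>\<^sup>2 / L" using Ak1 by simp
    finally show ?thesis by simp
  qed
  finally show ?thesis unfolding Ak_def .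
qed

end

theorem corollary1:
  fixes f :: "real ^ 'n \<Rightarrow> real" and df :: "real ^ 'n \<Rightarrow> real ^ 'n"
    and L \<Delta> :: real and xs u0 :: "real ^ 'n" and \<xi> :: "real ^ 'n \<Rightarrow> real"
  defines "n \<equiv> real CARD('n)"
  defines "G \<equiv> (\<lambda>x e. (n * (inner (df x) e + \<xi> x)) *\<^sub>R e)"
  defines "V \<equiv> (\<lambda>z x. L / 2 * (norm (x - z))\<^sup>2)"
  defines "xk \<equiv> rstm_x n UNIV V G u0"
  defines "P0 \<equiv> sqrt ((1 - 1 / n) * (f u0 - f xs) + L / 2 * (norm (u0 - xs))\<^sup>2)"
  assumes L_pos: "L > 0"
    and convex: "convex_on UNIV f"
    and grad: "\<And>x. GDERIV f x :> df x"
    and smooth: "\<And>x y. f x \<le> f y + inner (df y) (x - y) + L / 2 * (norm (x - y))\<^sup>2"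
    and min: "\<And>x. f xs \<le> f x"
    and xi_meas: "\<xi> \<in> borel_measurable borel"
    and xi_bound: "\<And>x. \<bar>\<xi> x\<bar> \<le> \<Delta>"
  shows "(\<forall>k\<ge>1. \<Delta> \<le> P0 * sqrt L / (4 * n * rstm_A n k) \<longrightarrow>
            (\<integral>\<omega>. f (xk \<omega> k) \<partial>sphere_seq_space) - f xs \<le> 6 * n\<^sup>2 * P0\<^sup>2 / (real k - 1 + 2 * n)\<^sup>2)
       \<and> (\<forall>k\<ge>1. (\<integral>\<omega>. f (xk \<omega> k) \<partial>sphere_seq_space) - f xs
            \<le> 8 * n\<^sup>2 * P0\<^sup>2 / (real k - 1 + 2 * n)\<^sup>2 + 4 / L * (real k - 1 + 2 * n)\<^sup>2 * \<Delta>\<^sup>2)"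
proof -
  interpret R: rstm_setting f df L \<Delta> xs \<xi>
    by (unfold_locales) (use assms in auto)
  define P2 where "P2 = (1 - 1 / n) * (f u0 - f xs) + L / 2 * (norm (u0 - xs))\<^sup>2"
  have P2eq: "P2 = R.\<Phi> 0 (u0, u0)" unfolding P2_def R.\<Phi>_def n_def by simp
  have P20: "P2 \<ge> 0" using R.Phi_nonneg P2eq by simp
  have P0sq: "P0\<^sup>2 = P2" unfolding P0_def P2_def[symmetric] using P20 by simp
  have xk: "xk \<omega> k = fst (R.st u0 k \<omega>)" for \<omega> k
    unfolding xk_def rstm_x_def G_def V_def n_def R.state_eq ..
  have main: "(\<Delta> \<le> P0 * sqrt L / (4 * n * rstm_A n k) \<longrightarrow>
            (\<integral>\<omega>. f (xk \<omega> k) \<partial>sphere_seq_space) - f xs \<le> 6 * n\<^sup>2 * P0\<^sup>2 / (real k - 1 + 2 * n)\<^sup>2)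
       \<and> (\<integral>\<omega>. f (xk \<omega> k) \<partial>sphere_seq_space) - f xs
            \<le> 8 * n\<^sup>2 * P0\<^sup>2 / (real k - 1 + 2 * n)\<^sup>2 + 4 / L * (real k - 1 + 2 * n)\<^sup>2 * \<Delta>\<^sup>2"
    if k: "k \<ge> 1" for k
  proof -
    have n1: "n \<ge> 1" unfolding n_def by (rule R.nn_ge1)
    have E: "(\<integral>\<omega>. f (xk \<omega> k) \<partial>sphere_seq_space) - f xs \<le> P2 / rstm_A n k + real k * \<Delta>\<^sup>2 / L"
      unfolding xk P2eq n_def by (rule R.exp_bound[OF k])
    have Ak: "rstm_A n k \<ge> ((real k - 1 + 2 * n) / (2 * n))\<^sup>2" by (rule A_lower[OF n1 k])
    have D: "real k - 1 + 2 * n > 0" using n1 k by simp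
    have kD: "real k \<le> (real k - 1 + 2 * n)\<^sup>2"
    proof -
      have "real k \<le> real k - 1 + 2 * n" using n1 by simp
      also have "\<dots> \<le> (real k - 1 + 2 * n)\<^sup>2" using D n1 k by (simp add: power2_eq_square)
      finally show ?thesis .
    qed
    have "P0 = sqrt P2" unfolding P0_def P2_def ..
    then show ?thesis
      using final_arith[OF n1 L_pos P20 R.Delta_nonneg Ak D kD _ E] P0sq
      by (simp add: real_sqrt_mult)
  qed
  show ?thesis using main by blast
qed


end
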